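(* Let $u\in\mathcal{B}^N$, $m\in\mathbb{R}$, $\varepsilon>0$, $(r,\gamma)\in F(N,A,u,m)$, and $(t,\sigma)\in F(N,A,u,m-\varepsilon)$ such that $\sigma$ is a perfect matching in $\mathcal{F}(r)$ and $r_a>t_a$ for each $a\in A$. Suppose there is no $i\in N$ and $a\in A$ with $r_a>b_i>t_a$. Then there is $\Lambda>0$ such that (1) for each $0<\Lambda'\le\Lambda$, every bijection $\mu$ maximizing $\sum_{i\in N}\log\lambda_{i\mu(i)}(u,r,\Lambda')$ satisfies $u_i(r_{\mu(i)},\mu(i))=u_i(r_{\gamma'(i)},\gamma'(i))$ for all $i\in N$ and all $\gamma'$ with $(r,\gamma')\in F(N,A,u,m)$; and (2) $\lambda_{i\sigma(i)}(u,r,\Lambda)(r_{\sigma(i)}-t_{\sigma(i)})\ge\lambda_{ia}(u,r,\Lambda)(r_a-t_a)$ for all $i\in N$ and $a\in A$, i.e. $(r-t,\sigma)$ is envy-free in the economy with consumption space $\mathbb{R}_{++}\times A$ where agent $i$'s utility is $(x_a,a)\mapsto\lambda_{ia}(u,r,\Lambda)x_a$ and the total to distribute is $\sum_{a\in A}(r_a-t_a)$.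
   Context: Fix a finite set $\{\rho_1,\dots,\rho_k\}\subseteq\mathbb{R}_+$ with $\rho_1=0$. $N=\{1,\dots,n\}$ agents, $A$ a set of $n$ rooms. $\mathcal{B}$ is the set of utility functions $u_i(r_a,a)=v^i_a-r_a-\rho_i\max\{0,r_a-b_i\}$ with $v^i\in\mathbb{R}^A$, $b_i\ge0$, $\rho_i\in\{\rho_1,\dots,\rho_k\}$. An allocation for $(N,A,u,m)$ is $(r,\sigma)$ with $\sigma:N\to A$ a bijection, $r\in\mathbb{R}^A$, $\sum_ar_a=m$; envy-free means $u_i(r_{\sigma(i)},\sigma(i))\ge u_i(r_{\sigma(j)},\sigma(j))$ for all $i,j$; $F(N,A,u,m)$ is the set of envy-free allocations. $\lambda_{ia}(u,r):=1+\rho_i$ if $r_a>b_i$, else $1$. For $r$ with some envy-free $(r,\gamma)$: $\mathcal{F}(r)$ is the bipartite graph on $N\cup A$ with edge $(i,a)$ iff $u_i(r_{\gamma(i)},\gamma(i))=u_i(r_a,a)$, and a perfect matching in $\mathcal{F}(r)$ is a bijection $N\to A$ using only its edges; for $\Lambda>0$, $\lambda_{ia}(u,r,\Lambda):=\lambda_{ia}(u,r)$ if $u_i(r_{\gamma(i)},\gamma(i))=u_i(r_a,a)$ and $:=\Lambda$ otherwise. *)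

theory Defs
  imports Complex_Main
begin

text \<open>A utility profile in B^N is given by valuations v, budgets b, and penalty
  rates rho (each taken from a fixed finite set Rho of nonnegative reals containing 0).\<close>

definition util :: "(nat \<Rightarrow> 'a \<Rightarrow> real) \<Rightarrow> (nat \<Rightarrow> real) \<Rightarrow> (nat \<Rightarrow> real)
                    \<Rightarrow> nat \<Rightarrow> real \<Rightarrow> 'a \<Rightarrow> real" where
  "util v b rho i x a = v i a - x - rho i * max 0 (x - b i)"

definition EF :: "nat set \<Rightarrow> 'a set \<Rightarrow> (nat \<Rightarrow> real \<Rightarrow> 'a \<Rightarrow> real) \<Rightarrow> real
                  \<Rightarrow> (('a \<Rightarrow> real) \<times> (nat \<Rightarrow> 'a)) set" where
  "EF N A u m = {(r, \<sigma>). bij_betw \<sigma> N A \<and> sum r A = m \<and>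
      (\<forall>i\<in>N. \<forall>j\<in>N. u i (r (\<sigma> j)) (\<sigma> j) \<le> u i (r (\<sigma> i)) (\<sigma> i))}"

definition lam :: "(nat \<Rightarrow> real) \<Rightarrow> (nat \<Rightarrow> real) \<Rightarrow> ('a \<Rightarrow> real) \<Rightarrow> nat \<Rightarrow> 'a \<Rightarrow> real" where
  "lam b rho r i a = (if r a > b i then 1 + rho i else 1)"

definition lamL :: "(nat \<Rightarrow> real \<Rightarrow> 'a \<Rightarrow> real) \<Rightarrow> (nat \<Rightarrow> real) \<Rightarrow> (nat \<Rightarrow> real)
                    \<Rightarrow> ('a \<Rightarrow> real) \<Rightarrow> (nat \<Rightarrow> 'a) \<Rightarrow> real \<Rightarrow> nat \<Rightarrow> 'a \<Rightarrow> real" where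
  "lamL u b rho r \<gamma> \<Lambda> i a =
     (if u i (r (\<gamma> i)) (\<gamma> i) = u i (r a) a then lam b rho r i a else \<Lambda>)"

definition perfect_matching_F :: "nat set \<Rightarrow> 'a set \<Rightarrow> (nat \<Rightarrow> real \<Rightarrow> 'a \<Rightarrow> real)
                    \<Rightarrow> ('a \<Rightarrow> real) \<Rightarrow> (nat \<Rightarrow> 'a) \<Rightarrow> (nat \<Rightarrow> 'a) \<Rightarrow> bool" where
  "perfect_matching_F N A u r \<gamma> \<sigma> \<longleftrightarrow> bij_betw \<sigma> N A \<and>
      (\<forall>i\<in>N. u i (r (\<gamma> i)) (\<gamma> i) = u i (r (\<sigma> i)) (\<sigma> i))"

end

theory Submission
  imports Defs
begin

theorem lemma8:
  fixes n :: nat and A :: "'a set" and Rho :: "real set"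
    and v :: "nat \<Rightarrow> 'a \<Rightarrow> real" and b rho :: "nat \<Rightarrow> real"
    and m \<epsilon> :: real and r t :: "'a \<Rightarrow> real" and \<gamma> \<sigma> :: "nat \<Rightarrow> 'a"
  defines "N \<equiv> {1..n}" and "u \<equiv> util v b rho"
  assumes finA: "finite A" and cardA: "card A = n"
    and Rho: "finite Rho" "0 \<in> Rho" "\<forall>x\<in>Rho. x \<ge> 0"
    and b_nonneg: "\<forall>i\<in>N. b i \<ge> 0" and rho_in: "\<forall>i\<in>N. rho i \<in> Rho"
    and eps: "\<epsilon> > 0"
    and r_EF: "(r, \<gamma>) \<in> EF N A u m"
    and t_EF: "(t, \<sigma>) \<in> EF N A u (m - \<epsilon>)"
    and pm: "perfect_matching_F N A u r \<gamma> \<sigma>"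
    and r_gt_t: "\<forall>a\<in>A. r a > t a"
    and no_between: "\<not> (\<exists>i\<in>N. \<exists>a\<in>A. r a > b i \<and> b i > t a)"
  shows "\<exists>\<Lambda>>0.
     (\<forall>\<Lambda>'. 0 < \<Lambda>' \<and> \<Lambda>' \<le> \<Lambda> \<longrightarrow>
        (\<forall>\<mu>. bij_betw \<mu> N A \<and>
              (\<forall>\<mu>'. bij_betw \<mu>' N A \<longrightarrow>
                 (\<Sum>i\<in>N. ln (lamL u b rho r \<gamma> \<Lambda>' i (\<mu>' i)))
                   \<le> (\<Sum>i\<in>N. ln (lamL u b rho r \<gamma> \<Lambda>' i (\<mu> i))))
           \<longrightarrow> (\<forall>i\<in>N. \<forall>\<gamma>'. (r, \<gamma>') \<in> EF N A u m \<longrightarrow>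
                  u i (r (\<mu> i)) (\<mu> i) = u i (r (\<gamma>' i)) (\<gamma>' i)))) \<and>
     (\<forall>i\<in>N. \<forall>a\<in>A. lamL u b rho r \<gamma> \<Lambda> i (\<sigma> i) * (r (\<sigma> i) - t (\<sigma> i))
                    \<ge> lamL u b rho r \<gamma> \<Lambda> i a * (r a - t a))"
proof -
  have bijg: "bij_betw \<gamma> N A" and efr: "\<forall>i\<in>N. \<forall>j\<in>N. u i (r (\<gamma> j)) (\<gamma> j) \<le> u i (r (\<gamma> i)) (\<gamma> i)"
    using r_EF unfolding EF_def by auto
  have bijs: "bij_betw \<sigma> N A" and eft: "\<forall>i\<in>N. \<forall>j\<in>N. u i (t (\<sigma> j)) (\<sigma> j) \<le> u i (t (\<sigma> i)) (\<sigma> i)"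
    using t_EF unfolding EF_def by auto
  have edge_s: "\<forall>i\<in>N. u i (r (\<gamma> i)) (\<gamma> i) = u i (r (\<sigma> i)) (\<sigma> i)"
    using pm by (simp add: perfect_matching_F_def)
  have finN: "finite N" by (simp add: N_def)
  have rho0: "\<forall>i\<in>N. rho i \<ge> 0" using rho_in Rho(3) by auto
  define C where "C = (\<Sum>i\<in>N. ln (1 + rho i))"
  have C0: "C \<ge> 0" unfolding C_def by (rule sum_nonneg) (simp add: rho0)
  define d where "d a = r a - t a" for a
  have dpos: "\<forall>a\<in>A. d a > 0" using r_gt_t by (simp add: d_def)
  define S where "S = insert (exp (-C)/2) ((\<lambda>(a,a'). d a' / d a) ` (A \<times> A))"
  define \<Lambda> where "\<Lambda> = Min S"
  have finS: "finite S" using finA by (simp add: S_def)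
  have SL: "\<Lambda> \<in> S" unfolding \<Lambda>_def by (rule Min_in[OF finS]) (simp add: S_def)
  have "\<Lambda> = exp(-C)/2 \<or> (\<exists>a\<in>A. \<exists>a'\<in>A. \<Lambda> = d a'/d a)" using SL by (auto simp: S_def)
  hence Lpos: "\<Lambda> > 0"
  proof
    assume "\<Lambda> = exp(-C)/2" thus ?thesis by (metis divide_pos_pos exp_gt_zero zero_less_numeral)
  next
    assume "\<exists>a\<in>A. \<exists>a'\<in>A. \<Lambda> = d a'/d a" thus ?thesis using dpos by (auto intro: divide_pos_pos)
  qed
  have Lle1: "\<Lambda> \<le> exp(-C)/2" unfolding \<Lambda>_def by (rule Min_le[OF finS]) (simp add: S_def)
  have Lle2: "\<Lambda> * d a \<le> d a'" if "a \<in> A" "a' \<in> A" for a a'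
  proof -
    have "d a' / d a \<in> S" unfolding S_def using that by (auto intro!: rev_image_eqI[of "(a,a')"])
    hence "\<Lambda> \<le> d a' / d a" unfolding \<Lambda>_def by (rule Min_le[OF finS])
    thus ?thesis using dpos that by (simp add: pos_le_divide_eq mult.commute)
  qed
  have lam1: "lam b rho r i x \<ge> 1" if "i \<in> N" for i x using rho0 that by (simp add: lam_def)
  have key: "u i (t x) x - u i (r x) x = lam b rho r i x * d x" if "i \<in> N" "x \<in> A" for i x
  proof -
    have "r x > t x" using r_gt_t that by auto
    moreover have "\<not> (r x > b i \<and> b i > t x)" using no_between that by auto
    ultimately show ?thesis unfolding u_def util_def lam_def d_def
      by (cases "r x > b i") (auto simp: max_def algebra_simps)
  qed
  show ?thesis
  proof (intro exI[of _ \<Lambda>] conjI Lpos allI impI ballI)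
    fix i a assume i: "i \<in> N" and a: "a \<in> A"
    have si: "\<sigma> i \<in> A" using bijs i bij_betwE by blast
    show "lamL u b rho r \<gamma> \<Lambda> i (\<sigma> i) * (r (\<sigma> i) - t (\<sigma> i)) \<ge> lamL u b rho r \<gamma> \<Lambda> i a * (r a - t a)"
    proof (cases "u i (r (\<gamma> i)) (\<gamma> i) = u i (r a) a")
      case True
      obtain j where j: "j \<in> N" "\<sigma> j = a" using bijs a by (metis bij_betw_iff_bijections)
      have "u i (t a) a \<le> u i (t (\<sigma> i)) (\<sigma> i)" using eft i j by auto
      moreover have "u i (r a) a = u i (r (\<sigma> i)) (\<sigma> i)" using True edge_s i by auto
      ultimately have "lam b rho r i a * d a \<le> lam b rho r i (\<sigma> i) * d (\<sigma> i)"
        using key[OF i a] key[OF i si] by linarith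
      thus ?thesis using True edge_s i by (simp add: lamL_def d_def)
    next
      case False
      have "\<Lambda> * d a \<le> d (\<sigma> i)" using Lle2 a si by auto
      also have "\<dots> \<le> lam b rho r i (\<sigma> i) * d (\<sigma> i)"
        using mult_right_mono[OF lam1[OF i, of "\<sigma> i"], of "d (\<sigma> i)"] dpos si by auto
      finally show ?thesis using False edge_s i by (simp add: lamL_def d_def)
    qed
  next
    fix \<Lambda>' \<mu> i \<gamma>'
    assume L': "0 < \<Lambda>' \<and> \<Lambda>' \<le> \<Lambda>"
    assume mu: "bij_betw \<mu> N A \<and>
              (\<forall>\<mu>'. bij_betw \<mu>' N A \<longrightarrow>
                 (\<Sum>i\<in>N. ln (lamL u b rho r \<gamma> \<Lambda>' i (\<mu>' i)))
                   \<le> (\<Sum>i\<in>N. ln (lamL u b rho r \<gamma> \<Lambda>' i (\<mu> i))))"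
    assume i: "i \<in> N" and g': "(r, \<gamma>') \<in> EF N A u m"
    have eC: "exp (-C) \<le> 1" using C0 by simp
    have L'1: "\<Lambda>' \<le> 1" using L' Lle1 eC by linarith
    have L'2: "\<Lambda>' < exp (-C)" using L' Lle1 exp_gt_zero[of "-C"] by linarith
    have allE: "\<forall>i\<in>N. u i (r (\<mu> i)) (\<mu> i) = u i (r (\<gamma> i)) (\<gamma> i)"
    proof (rule ccontr)
      assume "\<not> ?thesis"
      then obtain i0 where i0: "i0 \<in> N" "u i0 (r (\<mu> i0)) (\<mu> i0) \<noteq> u i0 (r (\<gamma> i0)) (\<gamma> i0)" by auto
      have s0: "0 \<le> (\<Sum>i\<in>N. ln (lamL u b rho r \<gamma> \<Lambda>' i (\<sigma> i)))"
      proof (rule sum_nonneg)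
        fix i assume i: "i \<in> N"
        have "lamL u b rho r \<gamma> \<Lambda>' i (\<sigma> i) = lam b rho r i (\<sigma> i)" using edge_s i by (simp add: lamL_def)
        thus "0 \<le> ln (lamL u b rho r \<gamma> \<Lambda>' i (\<sigma> i))" using lam1[OF i] by simp
      qed
      have bnd: "ln (lamL u b rho r \<gamma> \<Lambda>' i x) \<le> ln (1 + rho i)" if "i \<in> N" for i x
      proof -
        have "lamL u b rho r \<gamma> \<Lambda>' i x \<le> 1 + rho i" "lamL u b rho r \<gamma> \<Lambda>' i x > 0"
          using rho0 that L' L'1 by (auto simp: lamL_def lam_def)
        thus ?thesis by simp
      qed
      have "(\<Sum>i\<in>N. ln (lamL u b rho r \<gamma> \<Lambda>' i (\<mu> i)))
          = ln (lamL u b rho r \<gamma> \<Lambda>' i0 (\<mu> i0)) + (\<Sum>i\<in>N-{i0}. ln (lamL u b rho r \<gamma> \<Lambda>' i (\<mu> i)))"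
        using finN i0 by (simp add: sum.remove)
      also have "ln (lamL u b rho r \<gamma> \<Lambda>' i0 (\<mu> i0)) = ln \<Lambda>'" using i0 by (auto simp: lamL_def)
      also have "(\<Sum>i\<in>N-{i0}. ln (lamL u b rho r \<gamma> \<Lambda>' i (\<mu> i))) \<le> (\<Sum>i\<in>N-{i0}. ln (1 + rho i))"
        using bnd by (intro sum_mono) auto
      also have "(\<Sum>i\<in>N-{i0}. ln (1 + rho i)) \<le> C"
      proof -
        have "C = ln (1 + rho i0) + (\<Sum>i\<in>N-{i0}. ln (1 + rho i))"
          unfolding C_def using finN i0 by (simp add: sum.remove)
        moreover have "ln (1 + rho i0) \<ge> 0" using rho0 i0 by simp
        ultimately show ?thesis by linarith
      qed
      finally have "(\<Sum>i\<in>N. ln (lamL u b rho r \<gamma> \<Lambda>' i (\<mu> i))) \<le> ln \<Lambda>' + C" by simp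
      moreover have "ln \<Lambda>' < -C" using L'2 L' by (metis ln_exp ln_less_cancel_iff exp_gt_zero)
      moreover have "(\<Sum>i\<in>N. ln (lamL u b rho r \<gamma> \<Lambda>' i (\<sigma> i))) \<le> (\<Sum>i\<in>N. ln (lamL u b rho r \<gamma> \<Lambda>' i (\<mu> i)))"
        using mu bijs by blast
      ultimately show False using s0 by linarith
    qed
      have bijg': "bij_betw \<gamma>' N A" and efg: "\<forall>i\<in>N. \<forall>j\<in>N. u i (r (\<gamma>' j)) (\<gamma>' j) \<le> u i (r (\<gamma>' i)) (\<gamma>' i)"
        using g' unfolding EF_def by auto
      have gi: "\<gamma> i \<in> A" using bijg i bij_betwE by blast
      have g'i: "\<gamma>' i \<in> A" using bijg' i bij_betwE by blast
      obtain j where j: "j \<in> N" "\<gamma>' j = \<gamma> i" using bijg' gi by (metis bij_betw_iff_bijections)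
      obtain k where k: "k \<in> N" "\<gamma> k = \<gamma>' i" using bijg g'i by (metis bij_betw_iff_bijections)
      have "u i (r (\<gamma> i)) (\<gamma> i) \<le> u i (r (\<gamma>' i)) (\<gamma>' i)" using efg i j by metis
      moreover have "u i (r (\<gamma>' i)) (\<gamma>' i) \<le> u i (r (\<gamma> i)) (\<gamma> i)" using efr i k by metis
      ultimately show "u i (r (\<mu> i)) (\<mu> i) = u i (r (\<gamma>' i)) (\<gamma>' i)" using allE i by auto
  qed
qed

end
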